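(* Consider the no-slip billiard in a circular solid cylinder $\mathcal{B}\subset\mathbb{R}^3$ with axis vector $e$, whose moving particle is subject to a constant force directed along the axis of the cylinder. If the first collision satisfies the transversal rolling impact condition and the first flight segment does not pass through the axis of the cylinder, then the particle's trajectory is bounded.
   Context: The moving particle is a ball of radius $r>0$ with a rotationally symmetric mass distribution of total mass $m$ whose second-moment matrix per unit mass is $\lambda I$, $\lambda=(r\gamma)^2/2$, $\gamma>0$. Put $c=\frac{1-\gamma^2}{1+\gamma^2}$, $s=\frac{2\gamma}{1+\gamma^2}$, and for $a,b\in\mathbb{R}^3$ let $a\wedge b\in\mathfrak{so}(3)$ be $(a\wedge b)x=(a\cdot x)b-(b\cdot x)a$. The billiard domain $\mathcal{B}$ (the set of admissible centers) is $\{x:|x-(x\cdot e)e|\le R-r\}$ for some $R>r$; at $a\in\partial\mathcal{B}$, $\nu_a$ is the unit normal pointing into $\mathcal{B}$. A state is $(a,u,U)$ with $u$ the center-of-mass velocity and $U\in\mathfrak{so}(3)$ the angular velocity matrix (a material point at $x$ has velocity $U(x-a)+u$). Between collisions $U$ is constant and the center of mass moves with constant acceleration $F/m$, $F$ the constant force; at a collision at $a$ the pre-collision $(u,U)$ is replaced by $C_a(u,U)=\big(cu-\tfrac{s}{\gamma}(u\cdot\nu_a)\nu_a+s\gamma rU\nu_a,\ \tfrac{s}{\gamma r}\nu_a\wedge u+U-\tfrac{s}{\gamma}\nu_a\wedge U\nu_a\big)$. A pre-collision state $(a,u,U)$ satisfies the transversal rolling impact condition if the orthogonal projection of $v=u-rU\nu_a$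 onto $e^\perp\cap T_a\partial\mathcal{B}$ is zero; equivalently, with $\omega$ defined by $Ux=\omega\times x$ and $\tau_a=\nu_a\times e$, $u\cdot\tau_a+r\,\omega\cdot e=0$. *)

theory Defs
  imports "HOL-Analysis.Analysis" "HOL-Analysis.Cross3"
begin

text \<open>Vectors in R^3 and 3x3 matrices (angular velocity matrices U in so(3)).
  The cylinder axis is the line through the origin spanned by the unit vector e.\<close>

definition perp :: "real^3 \<Rightarrow> real^3 \<Rightarrow> real^3" where
  "perp e x = x - (x \<bullet> e) *\<^sub>R e"

text \<open>Billiard domain (admissible centers), its boundary, and the axis.\<close>
definition cylB :: "real^3 \<Rightarrow> real \<Rightarrow> real \<Rightarrow> (real^3) set" where
  "cylB e R r = {x. norm (perp e x) \<le> R - r}"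

definition cylBd :: "real^3 \<Rightarrow> real \<Rightarrow> real \<Rightarrow> (real^3) set" where
  "cylBd e R r = {x. norm (perp e x) = R - r}"

definition axis :: "real^3 \<Rightarrow> (real^3) set" where
  "axis e = {x. perp e x = 0}"

definition nrm :: "real^3 \<Rightarrow> real^3 \<Rightarrow> real^3" where
  "nrm e a = - ((1 / norm (perp e a)) *\<^sub>R perp e a)"

definition wedge :: "real^3 \<Rightarrow> real^3 \<Rightarrow> real^3^3" where
  "wedge a b = (\<chi> i j. b $ i * a $ j - a $ i * b $ j)"

definition cc :: "real \<Rightarrow> real" where "cc \<gamma> = (1 - \<gamma>^2) / (1 + \<gamma>^2)"
definition ss :: "real \<Rightarrow> real" where "ss \<gamma> = 2 * \<gamma> / (1 + \<gamma>^2)"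

definition coll_u :: "real \<Rightarrow> real \<Rightarrow> real^3 \<Rightarrow> real^3 \<Rightarrow> real^3^3 \<Rightarrow> real^3" where
  "coll_u \<gamma> r \<nu> u U =
     cc \<gamma> *\<^sub>R u - (ss \<gamma> / \<gamma> * (u \<bullet> \<nu>)) *\<^sub>R \<nu> + (ss \<gamma> * \<gamma> * r) *\<^sub>R (U *v \<nu>)"

definition coll_U :: "real \<Rightarrow> real \<Rightarrow> real^3 \<Rightarrow> real^3 \<Rightarrow> real^3^3 \<Rightarrow> real^3^3" where
  "coll_U \<gamma> r \<nu> u U =
     (ss \<gamma> / (\<gamma> * r)) *\<^sub>R wedge \<nu> u + U - (ss \<gamma> / \<gamma>) *\<^sub>R wedge \<nu> (U *v \<nu>)"

definition flight ::
  "real^3 \<Rightarrow> real \<Rightarrow> real \<Rightarrow> real \<Rightarrow> real^3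
   \<Rightarrow> (nat \<Rightarrow> real^3) \<Rightarrow> (nat \<Rightarrow> real^3) \<Rightarrow> (nat \<Rightarrow> real^3^3) \<Rightarrow> nat \<Rightarrow> real \<Rightarrow> real^3" where
  "flight e r \<gamma> m F a u U k s =
     a k + s *\<^sub>R coll_u \<gamma> r (nrm e (a k)) (u k) (U k) + (s^2 / (2 * m)) *\<^sub>R F"

text \<open>Admissible time parameters of the k-th flight segment; the last flight
  (if there are only finitely many collisions, N of them) lasts forever.\<close>
definition flight_dom :: "enat \<Rightarrow> (nat \<Rightarrow> real) \<Rightarrow> nat \<Rightarrow> real set" where
  "flight_dom N t k = {s. 0 \<le> s \<and> (enat (Suc k) < N \<longrightarrow> s \<le> t (Suc k) - t k)}"

text \<open>A no-slip billiard orbit starting at its first collision: N \<ge> 1 collisions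
  (possibly infinitely many), at times t k, at centers a k, with pre-collision
  velocities u k, U k.\<close>
definition orbit ::
  "real^3 \<Rightarrow> real \<Rightarrow> real \<Rightarrow> real \<Rightarrow> real \<Rightarrow> real^3 \<Rightarrow> enat
   \<Rightarrow> (nat \<Rightarrow> real) \<Rightarrow> (nat \<Rightarrow> real^3) \<Rightarrow> (nat \<Rightarrow> real^3) \<Rightarrow> (nat \<Rightarrow> real^3^3) \<Rightarrow> bool" where
  "orbit e R r \<gamma> m F N t a u U \<longleftrightarrow>
     1 \<le> N \<and>
     (\<forall>k. enat k < N \<longrightarrow> a k \<in> cylBd e R r) \<and>
     (\<forall>k. enat (Suc k) < N \<longrightarrow>
        t k < t (Suc k) \<and>
        (\<forall>s. 0 < s \<and> s < t (Suc k) - t k \<longrightarrow>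
             norm (perp e (flight e r \<gamma> m F a u U k s)) < R - r) \<and>
        a (Suc k) = flight e r \<gamma> m F a u U k (t (Suc k) - t k) \<and>
        u (Suc k) = coll_u \<gamma> r (nrm e (a k)) (u k) (U k) + ((t (Suc k) - t k) / m) *\<^sub>R F \<and>
        U (Suc k) = coll_U \<gamma> r (nrm e (a k)) (u k) (U k)) \<and>
     (\<forall>k. N = enat (Suc k) \<longrightarrow>
        (\<forall>s. 0 < s \<longrightarrow> norm (perp e (flight e r \<gamma> m F a u U k s)) < R - r))"

text \<open>Transversal rolling impact condition at a pre-collision state (a,u,U):
  the projection of v = u - r U nu_a onto e-perp \<inter> T_a(boundary) = span(nu_a x e) vanishes.\<close>
definition trans_rolling :: "real^3 \<Rightarrow> real \<Rightarrow> real^3 \<Rightarrow> real^3 \<Rightarrow> real^3^3 \<Rightarrow> bool" where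
  "trans_rolling e r a u U \<longleftrightarrow>
     (let \<nu> = nrm e a; \<tau> = cross3 \<nu> e; v = u - r *\<^sub>R (U *v \<nu>) in (v \<bullet> \<tau>) *\<^sub>R \<tau> = 0)"

end

theory Submission
  imports Defs
begin


lemma cs_facts:
  assumes "(\<gamma>::real) > 0"
  shows "cc \<gamma> - ss \<gamma> / \<gamma> = -1" "cc \<gamma> + ss \<gamma> * \<gamma> = 1"
    "ss \<gamma> / \<gamma> - cc \<gamma> = 1" "(cc \<gamma>)^2 + (ss \<gamma>)^2 = 1"
    "ss \<gamma> / \<gamma> = 1 + cc \<gamma>" "ss \<gamma> * \<gamma> = 1 - cc \<gamma>"
proof -
  have d: "1 + \<gamma>^2 \<noteq> 0" by (smt (verit) zero_le_power2)
  have a: "ss \<gamma> / \<gamma> = 2 / (1 + \<gamma>^2)" unfolding ss_def using assms by simp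
  have b: "ss \<gamma> * \<gamma> = 2 * \<gamma>^2 / (1 + \<gamma>^2)" unfolding ss_def by (simp add: power2_eq_square)
  have c: "cc \<gamma> = (1 - \<gamma>^2) / (1 + \<gamma>^2)" unfolding cc_def by simp
  show 5: "ss \<gamma> / \<gamma> = 1 + cc \<gamma>" unfolding a c using d by (simp add: field_simps)
  show 6: "ss \<gamma> * \<gamma> = 1 - cc \<gamma>" unfolding b c using d by (simp add: field_simps)
  show "cc \<gamma> - ss \<gamma> / \<gamma> = -1" "cc \<gamma> + ss \<gamma> * \<gamma> = 1"
    "ss \<gamma> / \<gamma> - cc \<gamma> = 1" using 5 6 by auto
  have "(cc \<gamma>)^2 + (ss \<gamma>)^2 = ((1 - \<gamma>^2)^2 + (2*\<gamma>)^2) / (1 + \<gamma>^2)^2"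
    unfolding cc_def ss_def by (simp add: power_divide add_divide_distrib)
  also have "\<dots> = 1" using d by (simp add: field_simps) (simp add: power2_eq_square algebra_simps)
  finally show "(cc \<gamma>)^2 + (ss \<gamma>)^2 = 1" .
qed

lemma scalar_bounded:
  fixes p A B z :: "nat \<Rightarrow> real" and \<gamma> C S G T :: real
  assumes g: "\<gamma> > 0" and CS: "C^2 + S^2 = 1" and C1: "C \<noteq> 1"
    and rp: "\<And>k. p (Suc k) = cc \<gamma> * p k + ss \<gamma> * \<gamma> * A k + G"
    and rA: "\<And>k. A (Suc k) = C * ((ss \<gamma> / \<gamma>) * p k - cc \<gamma> * A k) + S * B k"
    and rB: "\<And>k. B (Suc k) = C * B k - S * ((ss \<gamma> / \<gamma>) * p k - cc \<gamma> * A k)"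
    and rz: "\<And>k. z (Suc k) = z k + T * (cc \<gamma> * p k + ss \<gamma> * \<gamma> * A k) + G * T / 2"
  shows "\<exists>M. \<forall>k. \<bar>z k\<bar> \<le> M \<and> \<bar>p k\<bar> \<le> M"
proof -
  let ?c = "cc \<gamma>" and ?s = "ss \<gamma>"
  note f = cs_facts[OF g]
  have C1': "1 - C \<noteq> 0" using C1 by simp
  have g2: "\<gamma>^2 \<noteq> 0" using g by simp
  have SS: "S * S = 1 - C * C" using CS by (simp add: power2_eq_square)
  have S2: "S * (S * w) = (1 - C * C) * w" for w by (metis SS mult.assoc)
  define ps where "ps = G / 2"
  define As where "As = - G / (2 * \<gamma>^2)"
  define Bs where "Bs = - S * G / (2 * \<gamma>^2 * (1 - C))"
  define y1 where "y1 k = p k - ps" for k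
  define y2 where "y2 k = A k - As" for k
  define y3 where "y3 k = B k - Bs" for k
  have sg: "?s * \<gamma> * As = - (1 + ?c) * G / 2" unfolding As_def f(5)[symmetric] using g
    by (simp add: power2_eq_square)
  have e1: "y1 (Suc k) = ?c * y1 k + ?s * \<gamma> * y2 k" for k
  proof -
    have "ps = ?c * ps + ?s * \<gamma> * As + G"
      unfolding sg ps_def by (simp add: field_simps)
    then show ?thesis unfolding y1_def y2_def using rp[of k] by (simp add: algebra_simps)
  qed
  have q0: "?s / \<gamma> * ps = (?s * \<gamma>) * G / (2 * \<gamma>^2)"
    unfolding ps_def using g by (simp add: field_simps power2_eq_square)
  have q: "?s / \<gamma> * ps - ?c * As = G / (2 * \<gamma>^2)"
    unfolding q0 f(6) As_def using g2 by (simp add: field_simps)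
  have e2: "y2 (Suc k) = C * ((?s / \<gamma>) * y1 k - ?c * y2 k) + S * y3 k" for k
  proof -
    have "As = C * (G / (2 * \<gamma>^2)) + S * Bs"
      unfolding As_def Bs_def using g2 C1'
      by (simp add: field_simps) (simp add: S2 algebra_simps)
    then have "As = C * ((?s / \<gamma>) * ps - ?c * As) + S * Bs" unfolding q .
    then show ?thesis unfolding y1_def y2_def y3_def using rA[of k] g by (simp add: field_simps)
  qed
  have e3: "y3 (Suc k) = C * y3 k - S * ((?s / \<gamma>) * y1 k - ?c * y2 k)" for k
  proof -
    have "Bs = C * Bs - S * (G / (2 * \<gamma>^2))"
      unfolding Bs_def using g2 C1' by (simp add: field_simps)
    then have "Bs = C * Bs - S * ((?s / \<gamma>) * ps - ?c * As)" unfolding q .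
    then show ?thesis unfolding y1_def y2_def y3_def using rB[of k] g by (simp add: field_simps)
  qed
  define Q where "Q k = (y1 k)^2 + \<gamma>^2 * (y2 k)^2 + \<gamma>^2 * (y3 k)^2" for k
  have QS: "Q (Suc k) = Q k" for k
  proof -
    define qq where "qq = (?s / \<gamma>) * y1 k - ?c * y2 k"
    have h1: "Q (Suc k) = (?c * y1 k + ?s * \<gamma> * y2 k)^2 + \<gamma>^2 * ((C * qq + S * y3 k)^2 + (C * y3 k - S * qq)^2)"
      unfolding Q_def e1 e2 e3 qq_def by (simp add: algebra_simps)
    have h2: "(C * qq + S * y3 k)^2 + (C * y3 k - S * qq)^2 = (C^2 + S^2) * (qq^2 + (y3 k)^2)"
      by (simp add: power2_eq_square algebra_simps)
    have h3: "\<gamma>^2 * qq^2 = (?s * y1 k - ?c * \<gamma> * y2 k)^2"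
      unfolding qq_def using g by (simp add: field_simps power2_eq_square)
    have "Q (Suc k) = (?c * y1 k + ?s * \<gamma> * y2 k)^2 + (?s * y1 k - ?c * \<gamma> * y2 k)^2 + \<gamma>^2 * (y3 k)^2"
      unfolding h1 h2 CS h3[symmetric] by (simp add: algebra_simps)
    also have "\<dots> = (?c^2 + ?s^2) * (y1 k)^2 + (?c^2 + ?s^2) * \<gamma>^2 * (y2 k)^2 + \<gamma>^2 * (y3 k)^2"
      by (simp add: power2_eq_square algebra_simps)
    finally show ?thesis unfolding f(4) Q_def by simp
  qed
  have Qc: "Q k = Q 0" for k by (induction k) (auto simp: QS)
  have Qb1: "\<bar>y1 k\<bar> \<le> sqrt (Q 0)" for k
  proof -
    have "(y1 k)^2 \<le> Q k" unfolding Q_def by (simp add: add_nonneg_nonneg)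
    then have "\<bar>y1 k\<bar>^2 \<le> Q 0" using Qc[of k] by simp
    then show ?thesis by (rule real_le_rsqrt)
  qed
  have Qb2: "\<gamma> * \<bar>y2 k\<bar> \<le> sqrt (Q 0)" for k
  proof -
    have "(\<gamma> * y2 k)^2 \<le> Q k" unfolding Q_def by (simp add: power_mult_distrib add_nonneg_nonneg)
    then have "\<bar>\<gamma> * y2 k\<bar>^2 \<le> Q 0" using Qc[of k] by simp
    then have "\<bar>\<gamma> * y2 k\<bar> \<le> sqrt (Q 0)" by (rule real_le_rsqrt)
    then show ?thesis using g by (simp add: abs_mult)
  qed
  have Qb3: "\<gamma> * \<bar>y3 k\<bar> \<le> sqrt (Q 0)" for k
  proof -
    have "(\<gamma> * y3 k)^2 \<le> Q k" unfolding Q_def by (simp add: power_mult_distrib add_nonneg_nonneg)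
    then have "\<bar>\<gamma> * y3 k\<bar>^2 \<le> Q 0" using Qc[of k] by simp
    then have "\<bar>\<gamma> * y3 k\<bar> \<le> sqrt (Q 0)" by (rule real_le_rsqrt)
    then show ?thesis using g by (simp add: abs_mult)
  qed
  define K where "K = sqrt (Q 0)"
  have Q0: "0 \<le> Q 0" unfolding Q_def by (simp add: add_nonneg_nonneg)
  have K0: "0 \<le> K" unfolding K_def using Q0 by simp
  have b1: "\<bar>p k\<bar> \<le> K + \<bar>ps\<bar>" for k using Qb1[of k] unfolding y1_def K_def by linarith
  have b2: "\<bar>A k\<bar> \<le> K / \<gamma> + \<bar>As\<bar>" for k
  proof -
    have "\<bar>y2 k\<bar> \<le> K / \<gamma>" using Qb2[of k] g unfolding K_def by (simp add: field_simps)
    then show ?thesis unfolding y2_def by linarith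
  qed
  have b3: "\<bar>B k\<bar> \<le> K / \<gamma> + \<bar>Bs\<bar>" for k
  proof -
    have "\<bar>y3 k\<bar> \<le> K / \<gamma>" using Qb3[of k] g unfolding K_def by (simp add: field_simps)
    then show ?thesis unfolding y3_def by linarith
  qed
  define \<phi> where "\<phi> k = p k / 2 - A k / 2 - S * B k / (2 * (1 - C))" for k
  have ph: "z (Suc k) - T * \<phi> (Suc k) = z k - T * \<phi> k" for k
  proof -
    define qq where "qq = (?s / \<gamma>) * p k - ?c * A k"
    have "\<phi> (Suc k) = (?c * p k + ?s * \<gamma> * A k + G) / 2 - (C * qq + S * B k) / 2
       - S * (C * B k - S * qq) / (2 * (1 - C))"
      unfolding \<phi>_def rp rA rB qq_def ..
    also have "\<dots> = (?c * p k + ?s * \<gamma> * A k + G) / 2 + qq / 2 - S * B k / (2 * (1 - C))"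
      using C1' by (simp add: field_simps) (simp add: S2 algebra_simps)
    finally have "\<phi> (Suc k) - \<phi> k = (?c * p k + ?s * \<gamma> * A k + G) / 2 + qq / 2 - p k / 2 + A k / 2"
      unfolding \<phi>_def by simp
    also have "\<dots> = (?c * p k + ?s * \<gamma> * A k) + G / 2"
    proof -
      have "?s * \<gamma> * A k = (1 - ?c) * A k" using f(6) by simp
      then show ?thesis unfolding qq_def f(5) by (simp add: field_simps)
    qed
    finally show ?thesis using rz[of k] by (simp add: algebra_simps)
  qed
  have phc: "z k - T * \<phi> k = z 0 - T * \<phi> 0" for k by (induction k) (auto simp: ph)
  define M1 where "M1 = K + \<bar>ps\<bar>"
  define M2 where "M2 = K / \<gamma> + \<bar>As\<bar>"
  define M3 where "M3 = K / \<gamma> + \<bar>Bs\<bar>"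
  have phb: "\<bar>\<phi> k\<bar> \<le> M1 / 2 + M2 / 2 + \<bar>S / (2 * (1 - C))\<bar> * M3" for k
  proof -
    have "\<bar>\<phi> k\<bar> \<le> \<bar>p k\<bar> / 2 + \<bar>A k\<bar> / 2 + \<bar>S / (2 * (1 - C))\<bar> * \<bar>B k\<bar>"
    proof -
      have eq: "S * B k / (2 * (1 - C)) = S / (2 * (1 - C)) * B k" by simp
      have "\<bar>S / (2 * (1 - C)) * B k\<bar> = \<bar>S / (2 * (1 - C))\<bar> * \<bar>B k\<bar>" by (rule abs_mult)
      then show ?thesis unfolding \<phi>_def eq by arith
    qed
    also have "\<dots> \<le> M1 / 2 + M2 / 2 + \<bar>S / (2 * (1 - C))\<bar> * M3"
      using b1[of k] b2[of k] b3[of k] unfolding M1_def M2_def M3_def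
      by (intro add_mono mult_left_mono) auto
    finally show ?thesis .
  qed
  define M where "M = \<bar>z 0 - T * \<phi> 0\<bar> + \<bar>T\<bar> * (M1 / 2 + M2 / 2 + \<bar>S / (2 * (1 - C))\<bar> * M3) + M1"
  have "\<bar>z k\<bar> \<le> M \<and> \<bar>p k\<bar> \<le> M" for k
  proof -
    have "z k = (z 0 - T * \<phi> 0) + T * \<phi> k" using phc[of k] by simp
    moreover have "\<bar>T * \<phi> k\<bar> = \<bar>T\<bar> * \<bar>\<phi> k\<bar>" by (rule abs_mult)
    ultimately have "\<bar>z k\<bar> \<le> \<bar>z 0 - T * \<phi> 0\<bar> + \<bar>T\<bar> * \<bar>\<phi> k\<bar>" by arith
    also have "\<dots> \<le> \<bar>z 0 - T * \<phi> 0\<bar> + \<bar>T\<bar> * (M1 / 2 + M2 / 2 + \<bar>S / (2 * (1 - C))\<bar> * M3)"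
      using phb[of k] by (simp add: mult_left_mono)
    finally have "\<bar>z k\<bar> \<le> \<bar>z 0 - T * \<phi> 0\<bar> + \<bar>T\<bar> * (M1 / 2 + M2 / 2 + \<bar>S / (2 * (1 - C))\<bar> * M3)" .
    moreover have "0 \<le> M1" unfolding M1_def using K0 by simp
    moreover have "\<bar>p k\<bar> \<le> M1" using b1 M1_def by simp
    moreover have "0 \<le> \<bar>T\<bar> * (M1 / 2 + M2 / 2 + \<bar>S / (2 * (1 - C))\<bar> * M3)"
      using g K0 unfolding M1_def M2_def M3_def by simp
    ultimately show ?thesis unfolding M_def by linarith
  qed
  then show ?thesis by blast
qed



lemma triple: "cross3 a (cross3 b c) = (a \<bullet> c) *\<^sub>R b - (a \<bullet> b) *\<^sub>R c"
  by (simp add: cross3_simps forall_3)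

lemma dcs: "x \<bullet> cross3 x y = 0" "x \<bullet> cross3 y x = 0" "cross3 x y \<bullet> y = 0" "cross3 y x \<bullet> y = 0"
  by (simp_all add: cross3_simps)

lemma lagrange: "(cross3 a b) \<bullet> (cross3 c d) = (a \<bullet> c) * (b \<bullet> d) - (a \<bullet> d) * (b \<bullet> c)"
  by (simp add: cross3_def inner_vec_def sum_3 algebra_simps)

lemma cross_lin:
  "cross3 (x + y) z = cross3 x z + cross3 y z"
  "cross3 (c *\<^sub>R x) z = c *\<^sub>R cross3 x z"
  "cross3 (- x) z = - cross3 x z"
  by (simp_all add: cross3_simps forall_3)

lemma wedge_mv: "wedge a b *v x = (a \<bullet> x) *\<^sub>R b - (b \<bullet> x) *\<^sub>R a"
  by (simp add: wedge_def matrix_vector_mult_def vec_eq_iff inner_vec_def sum_3 algebra_simps forall_3)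


definition skw :: "real^3^3 \<Rightarrow> bool" where
  "skw U \<longleftrightarrow> (\<forall>x y. (U *v x) \<bullet> y = - ((U *v y) \<bullet> x))"

lemma skw_transpose:
  assumes "transpose U = - U" shows "skw U"
proof -
  have h: "U $ j $ i = - (U $ i $ j)" for i j
  proof -
    have "transpose U $ i $ j = (- U) $ i $ j" using assms by simp
    then show ?thesis by (simp add: transpose_def)
  qed
  have d: "U $ i $ i = 0" for i using h[of i i] by simp
  show ?thesis unfolding skw_def
  proof (intro allI)
    fix x y :: "real^3"
    show "(U *v x) \<bullet> y = - ((U *v y) \<bullet> x)"
      unfolding matrix_vector_mult_def inner_vec_def sum_3 vec_lambda_beta
      using d[of 1] d[of 2] d[of 3] h[of 2 1] h[of 3 1] h[of 3 2] by (simp add: algebra_simps)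
  qed
qed

lemma skw_self: "skw U \<Longrightarrow> (U *v x) \<bullet> x = 0"
  unfolding skw_def by (metis add.inverse_neutral add_eq_0_iff2 equal_neg_zero)

lemma mv_lin: fixes U :: "real^3^3" shows "U *v (x + y) = U *v x + U *v y" "U *v (x - y) = U *v x - U *v y"
  "U *v (c *\<^sub>R x) = c *\<^sub>R (U *v x)" "U *v (- x) = - (U *v x)"
  using matrix_vector_mul_linear[of U]
  by (simp_all add: linear_add linear_diff linear_scale linear_neg)

lemma smv: "(c *\<^sub>R A) *v x = c *\<^sub>R (A *v x)" for A :: "real^3^3"
  by (rule scaleR_matrix_vector_assoc[symmetric])

lemma skw_comb:
  assumes "skw U" shows "skw (\<alpha> *\<^sub>R wedge a b + U - \<beta> *\<^sub>R wedge c d)"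
proof -
  have "((\<alpha> *\<^sub>R wedge a b + U - \<beta> *\<^sub>R wedge c d) *v x) \<bullet> y =
     \<alpha> * ((a \<bullet> x) * (b \<bullet> y) - (b \<bullet> x) * (a \<bullet> y)) + (U *v x) \<bullet> y
     - \<beta> * ((c \<bullet> x) * (d \<bullet> y) - (d \<bullet> x) * (c \<bullet> y))" for x y
    by (simp only: matrix_vector_mult_add_rdistrib matrix_vector_mult_diff_rdistrib smv wedge_mv
        inner_diff_left inner_add_left inner_scaleR_left)
  note h = this
  show ?thesis unfolding skw_def
  proof (intro allI)
    fix x y
    have "(U *v x) \<bullet> y = - ((U *v y) \<bullet> x)" using assms unfolding skw_def by blast
    then show "((\<alpha> *\<^sub>R wedge a b + U - \<beta> *\<^sub>R wedge c d) *v x) \<bullet> y =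
      - (((\<alpha> *\<^sub>R wedge a b + U - \<beta> *\<^sub>R wedge c d) *v y) \<bullet> x)"
      unfolding h by (simp add: algebra_simps inner_commute)
  qed
qed


lemma frame:
  fixes e \<nu> :: "real^3"
  assumes ee: "e \<bullet> e = 1" and nn: "\<nu> \<bullet> \<nu> = 1" and ne: "\<nu> \<bullet> e = 0"
  shows "cross3 \<nu> e \<bullet> cross3 \<nu> e = 1" "cross3 \<nu> e \<bullet> e = 0" "cross3 \<nu> e \<bullet> \<nu> = 0"
    "cross3 (cross3 \<nu> e) e = - \<nu>"
    "x = (x \<bullet> \<nu>) *\<^sub>R \<nu> + (x \<bullet> cross3 \<nu> e) *\<^sub>R cross3 \<nu> e + (x \<bullet> e) *\<^sub>R e"
proof -
  define \<tau> where "\<tau> = cross3 \<nu> e"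
  have en: "e \<bullet> \<nu> = 0" using ne by (simp add: inner_commute)
  show tt: "cross3 \<nu> e \<bullet> cross3 \<nu> e = 1" unfolding lagrange using ee nn ne en by simp
  show "cross3 \<nu> e \<bullet> e = 0" "cross3 \<nu> e \<bullet> \<nu> = 0" using dcs by (auto simp: inner_commute)
  have "cross3 (cross3 \<nu> e) e = - cross3 e (cross3 \<nu> e)" by (rule cross_skew)
  also have "\<dots> = - \<nu>" unfolding triple using ee en by simp
  finally show te: "cross3 (cross3 \<nu> e) e = - \<nu>" .
  have "cross3 (cross3 \<nu> e) \<nu> = - cross3 \<nu> (cross3 \<nu> e)" by (rule cross_skew)
  also have "\<dots> = e" unfolding triple using nn ne by simp
  finally have tn: "cross3 \<tau> \<nu> = e" unfolding \<tau>_def .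
  have "cross3 \<tau> (cross3 x \<tau>) = x - (x \<bullet> \<tau>) *\<^sub>R \<tau>"
    unfolding triple using tt \<tau>_def by (simp add: inner_commute)
  moreover have "cross3 x \<tau> = (x \<bullet> e) *\<^sub>R \<nu> - (x \<bullet> \<nu>) *\<^sub>R e" unfolding \<tau>_def triple ..
  moreover have "cross3 \<tau> ((x \<bullet> e) *\<^sub>R \<nu> - (x \<bullet> \<nu>) *\<^sub>R e) = (x \<bullet> e) *\<^sub>R e + (x \<bullet> \<nu>) *\<^sub>R \<nu>"
  proof -
    have "cross3 \<tau> ((x \<bullet> e) *\<^sub>R \<nu> - (x \<bullet> \<nu>) *\<^sub>R e) = (x \<bullet> e) *\<^sub>R cross3 \<tau> \<nu> - (x \<bullet> \<nu>) *\<^sub>R cross3 \<tau> e"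
      by (simp add: cross3_simps forall_3)
    then show ?thesis using te tn \<tau>_def by simp
  qed
  ultimately have "x - (x \<bullet> \<tau>) *\<^sub>R \<tau> = (x \<bullet> e) *\<^sub>R e + (x \<bullet> \<nu>) *\<^sub>R \<nu>" by simp
  then show "x = (x \<bullet> \<nu>) *\<^sub>R \<nu> + (x \<bullet> cross3 \<nu> e) *\<^sub>R cross3 \<nu> e + (x \<bullet> e) *\<^sub>R e"
    unfolding \<tau>_def by (simp add: algebra_simps)
qed



lemma perp_frame:
  fixes e \<nu> :: "real^3"
  assumes ee: "e \<bullet> e = 1" and nn: "\<nu> \<bullet> \<nu> = 1" and ne: "\<nu> \<bullet> e = 0"
  shows "perp e x = (x \<bullet> \<nu>) *\<^sub>R \<nu> + (x \<bullet> cross3 \<nu> e) *\<^sub>R cross3 \<nu> e"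
  using frame(5)[OF assms, of x] unfolding perp_def
  by (metis add_diff_cancel_right')

lemma coll_U_mv:
  "coll_U \<gamma> r \<nu> u U *v x = (ss \<gamma> / (\<gamma> * r)) *\<^sub>R ((\<nu> \<bullet> x) *\<^sub>R u - (u \<bullet> x) *\<^sub>R \<nu>) + U *v x
     - (ss \<gamma> / \<gamma>) *\<^sub>R ((\<nu> \<bullet> x) *\<^sub>R (U *v \<nu>) - ((U *v \<nu>) \<bullet> x) *\<^sub>R \<nu>)"
  unfolding coll_U_def
  by (simp only: matrix_vector_mult_add_rdistrib matrix_vector_mult_diff_rdistrib smv wedge_mv)

lemma collision:
  fixes e \<nu> u :: "real^3" and U :: "real^3^3"
  assumes ee: "e \<bullet> e = 1" and nn: "\<nu> \<bullet> \<nu> = 1" and ne: "\<nu> \<bullet> e = 0"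
    and sk: "skw U" and g: "\<gamma> > 0" and r: "r > 0"
    and roll: "u \<bullet> cross3 \<nu> e = r * ((U *v \<nu>) \<bullet> cross3 \<nu> e)"
  shows "perp e (coll_u \<gamma> r \<nu> u U) = perp e u - (2 * (u \<bullet> \<nu>)) *\<^sub>R \<nu>"
    "coll_u \<gamma> r \<nu> u U \<bullet> e = cc \<gamma> * (u \<bullet> e) + ss \<gamma> * \<gamma> * (r * ((U *v \<nu>) \<bullet> e))"
    "skw (coll_U \<gamma> r \<nu> u U)"
    "r * ((coll_U \<gamma> r \<nu> u U *v \<nu>) \<bullet> e) = (ss \<gamma> / \<gamma>) * (u \<bullet> e) - cc \<gamma> * (r * ((U *v \<nu>) \<bullet> e))"
    "r * ((coll_U \<gamma> r \<nu> u U *v cross3 \<nu> e) \<bullet> e) = r * ((U *v cross3 \<nu> e) \<bullet> e)"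
    "coll_u \<gamma> r \<nu> u U \<bullet> cross3 \<nu> e = u \<bullet> cross3 \<nu> e"
    "(coll_U \<gamma> r \<nu> u U *v \<nu>) \<bullet> cross3 \<nu> e = (U *v \<nu>) \<bullet> cross3 \<nu> e"
proof -
  define \<tau> where "\<tau> = cross3 \<nu> e"
  note fr = frame[OF ee nn ne]
  have tt: "\<tau> \<bullet> \<tau> = 1" and te: "\<tau> \<bullet> e = 0" and tn: "\<tau> \<bullet> \<nu> = 0" using fr unfolding \<tau>_def by auto
  have nt: "\<nu> \<bullet> \<tau> = 0" using tn by (simp add: inner_commute)
  have en: "e \<bullet> \<nu> = 0" using ne by (simp add: inner_commute)
  have Unn: "(U *v \<nu>) \<bullet> \<nu> = 0" using sk by (rule skw_self)
  note f = cs_facts[OF g]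
  have rr: "r * (ss \<gamma> / (\<gamma> * r)) = ss \<gamma> / \<gamma>" using r by simp
  show "skw (coll_U \<gamma> r \<nu> u U)" unfolding coll_U_def by (rule skw_comb[OF sk])
  show "coll_u \<gamma> r \<nu> u U \<bullet> e = cc \<gamma> * (u \<bullet> e) + ss \<gamma> * \<gamma> * (r * ((U *v \<nu>) \<bullet> e))"
    unfolding coll_u_def using ne by (simp add: inner_add_left inner_diff_left)
  have ut: "coll_u \<gamma> r \<nu> u U \<bullet> \<tau> = u \<bullet> \<tau>"
  proof -
    have "coll_u \<gamma> r \<nu> u U \<bullet> \<tau> = cc \<gamma> * (u \<bullet> \<tau>) + ss \<gamma> * \<gamma> * (r * ((U *v \<nu>) \<bullet> \<tau>))"
      unfolding coll_u_def using nt by (simp add: inner_add_left inner_diff_left)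
    also have "\<dots> = (cc \<gamma> + ss \<gamma> * \<gamma>) * (u \<bullet> \<tau>)" using roll unfolding \<tau>_def by (simp add: algebra_simps)
    finally show ?thesis using f(2) by simp
  qed
  then show "coll_u \<gamma> r \<nu> u U \<bullet> cross3 \<nu> e = u \<bullet> cross3 \<nu> e" unfolding \<tau>_def .
  have un: "coll_u \<gamma> r \<nu> u U \<bullet> \<nu> = - (u \<bullet> \<nu>)"
  proof -
    have "coll_u \<gamma> r \<nu> u U \<bullet> \<nu> = cc \<gamma> * (u \<bullet> \<nu>) - ss \<gamma> / \<gamma> * (u \<bullet> \<nu>)"
      unfolding coll_u_def using nn Unn by (simp add: inner_add_left inner_diff_left)
    also have "\<dots> = (cc \<gamma> - ss \<gamma> / \<gamma>) * (u \<bullet> \<nu>)" by (simp add: algebra_simps)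
    finally show ?thesis using f(1) by simp
  qed
  show "perp e (coll_u \<gamma> r \<nu> u U) = perp e u - (2 * (u \<bullet> \<nu>)) *\<^sub>R \<nu>"
  proof -
    have two: "(2 * (u \<bullet> \<nu>)) *\<^sub>R \<nu> = (u \<bullet> \<nu>) *\<^sub>R \<nu> + (u \<bullet> \<nu>) *\<^sub>R \<nu>"
      by (simp add: scaleR_left_distrib[symmetric])
    show ?thesis unfolding perp_frame[OF ee nn ne] two using ut un unfolding \<tau>_def
      by (simp add: scaleR_minus_left)
  qed
  show "r * ((coll_U \<gamma> r \<nu> u U *v \<nu>) \<bullet> e) = (ss \<gamma> / \<gamma>) * (u \<bullet> e) - cc \<gamma> * (r * ((U *v \<nu>) \<bullet> e))"
  proof -
    have "r * ((coll_U \<gamma> r \<nu> u U *v \<nu>) \<bullet> e) = r * (ss \<gamma> / (\<gamma> * r)) * (u \<bullet> e) + (1 - ss \<gamma> / \<gamma>) * (r * ((U *v \<nu>) \<bullet> e))"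
      unfolding coll_U_mv using nn ne Unn by (simp add: inner_add_left inner_diff_left algebra_simps)
    then show ?thesis unfolding rr f(5) by (simp add: algebra_simps)
  qed
  show "r * ((coll_U \<gamma> r \<nu> u U *v cross3 \<nu> e) \<bullet> e) = r * ((U *v cross3 \<nu> e) \<bullet> e)"
    unfolding coll_U_mv using nt ne unfolding \<tau>_def by (simp add: inner_add_left inner_diff_left)
  show "(coll_U \<gamma> r \<nu> u U *v \<nu>) \<bullet> cross3 \<nu> e = (U *v \<nu>) \<bullet> cross3 \<nu> e"
  proof -
    have "(coll_U \<gamma> r \<nu> u U *v \<nu>) \<bullet> \<tau> = (ss \<gamma> / (\<gamma> * r)) * (u \<bullet> \<tau>) + (1 - ss \<gamma> / \<gamma>) * ((U *v \<nu>) \<bullet> \<tau>)"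
      unfolding coll_U_mv using nn nt Unn by (simp add: inner_add_left inner_diff_left algebra_simps)
    also have "(ss \<gamma> / (\<gamma> * r)) * (u \<bullet> \<tau>) = (ss \<gamma> / \<gamma>) * ((U *v \<nu>) \<bullet> \<tau>)"
      using roll r unfolding \<tau>_def by simp
    finally have "(coll_U \<gamma> r \<nu> u U *v \<nu>) \<bullet> \<tau> = (1 + (ss \<gamma> / \<gamma> - cc \<gamma>) - ss \<gamma> / \<gamma> + cc \<gamma>) * ((U *v \<nu>) \<bullet> \<tau>)"
      using f(3) by (simp add: algebra_simps)
    then show ?thesis unfolding \<tau>_def using f(3) by simp
  qed
qed



lemma transport:
  fixes e \<nu>0 \<nu>1 :: "real^3"
  assumes ee: "e \<bullet> e = 1" and n0: "\<nu>0 \<bullet> \<nu>0 = 1" and n0e: "\<nu>0 \<bullet> e = 0"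
    and n1: "\<nu>1 \<bullet> \<nu>1 = 1" and n1e: "\<nu>1 \<bullet> e = 0"
  shows "\<nu>1 = (\<nu>1 \<bullet> \<nu>0) *\<^sub>R \<nu>0 + (\<nu>1 \<bullet> cross3 \<nu>0 e) *\<^sub>R cross3 \<nu>0 e"
    "cross3 \<nu>1 e = (\<nu>1 \<bullet> \<nu>0) *\<^sub>R cross3 \<nu>0 e - (\<nu>1 \<bullet> cross3 \<nu>0 e) *\<^sub>R \<nu>0"
    "(\<nu>1 \<bullet> \<nu>0)^2 + (\<nu>1 \<bullet> cross3 \<nu>0 e)^2 = 1"
proof -
  note fr = frame[OF ee n0 n0e]
  define C where "C = \<nu>1 \<bullet> \<nu>0"
  define S where "S = \<nu>1 \<bullet> cross3 \<nu>0 e"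
  define \<tau> where "\<tau> = cross3 \<nu>0 e"
  have d: "\<nu>1 = C *\<^sub>R \<nu>0 + S *\<^sub>R \<tau>"
    using fr(5)[of \<nu>1] n1e unfolding C_def S_def \<tau>_def by simp
  then show "\<nu>1 = (\<nu>1 \<bullet> \<nu>0) *\<^sub>R \<nu>0 + (\<nu>1 \<bullet> cross3 \<nu>0 e) *\<^sub>R cross3 \<nu>0 e"
    unfolding C_def S_def \<tau>_def .
  have "cross3 \<nu>1 e = C *\<^sub>R cross3 \<nu>0 e + S *\<^sub>R cross3 \<tau> e"
    by (subst d) (simp add: cross_lin)
  then show "cross3 \<nu>1 e = (\<nu>1 \<bullet> \<nu>0) *\<^sub>R cross3 \<nu>0 e - (\<nu>1 \<bullet> cross3 \<nu>0 e) *\<^sub>R \<nu>0"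
    using fr(4) unfolding C_def S_def \<tau>_def by simp
  have tt: "\<tau> \<bullet> \<tau> = 1" and tn: "\<tau> \<bullet> \<nu>0 = 0" using fr unfolding \<tau>_def by auto
  have nt: "\<nu>0 \<bullet> \<tau> = 0" using tn by (simp add: inner_commute)
  have "1 = (C *\<^sub>R \<nu>0 + S *\<^sub>R \<tau>) \<bullet> (C *\<^sub>R \<nu>0 + S *\<^sub>R \<tau>)" using n1 d by simp
  also have "\<dots> = C^2 + S^2" using n0 tt tn nt
    by (simp add: inner_add_left inner_add_right power2_eq_square)
  finally show "(\<nu>1 \<bullet> \<nu>0)^2 + (\<nu>1 \<bullet> cross3 \<nu>0 e)^2 = 1" unfolding C_def S_def by simp
qed

lemma rot_skw:
  fixes U :: "real^3^3"
  assumes sk: "skw U" and d1: "\<nu>1 = C *\<^sub>R \<nu>0 + S *\<^sub>R \<tau>0" and d2: "\<tau>1 = C *\<^sub>R \<tau>0 - S *\<^sub>R \<nu>0"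
    and CS: "C^2 + S^2 = 1"
  shows "(U *v \<nu>1) \<bullet> \<tau>1 = (U *v \<nu>0) \<bullet> \<tau>0"
    "(U *v \<nu>1) \<bullet> e = C * ((U *v \<nu>0) \<bullet> e) + S * ((U *v \<tau>0) \<bullet> e)"
    "(U *v \<tau>1) \<bullet> e = C * ((U *v \<tau>0) \<bullet> e) - S * ((U *v \<nu>0) \<bullet> e)"
proof -
  have a: "(U *v \<nu>0) \<bullet> \<nu>0 = 0" "(U *v \<tau>0) \<bullet> \<tau>0 = 0" using sk by (auto intro: skw_self)
  have b: "(U *v \<tau>0) \<bullet> \<nu>0 = - ((U *v \<nu>0) \<bullet> \<tau>0)" using sk unfolding skw_def by blast
  have "(U *v \<nu>1) \<bullet> \<tau>1 = C * C * ((U *v \<nu>0) \<bullet> \<tau>0) - C * S * ((U *v \<nu>0) \<bullet> \<nu>0)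
      + S * C * ((U *v \<tau>0) \<bullet> \<tau>0) - S * S * ((U *v \<tau>0) \<bullet> \<nu>0)"
    unfolding d1 d2 by (simp add: mv_lin inner_add_left inner_add_right inner_diff_left inner_diff_right algebra_simps)
  also have "\<dots> = (C^2 + S^2) * ((U *v \<nu>0) \<bullet> \<tau>0)" unfolding a b by (simp add: power2_eq_square algebra_simps)
  finally show "(U *v \<nu>1) \<bullet> \<tau>1 = (U *v \<nu>0) \<bullet> \<tau>0" using CS by simp
  show "(U *v \<nu>1) \<bullet> e = C * ((U *v \<nu>0) \<bullet> e) + S * ((U *v \<tau>0) \<bullet> e)"
    unfolding d1 by (simp add: mv_lin inner_add_left)
  show "(U *v \<tau>1) \<bullet> e = C * ((U *v \<tau>0) \<bullet> e) - S * ((U *v \<nu>0) \<bullet> e)"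
    unfolding d2 by (simp add: mv_lin inner_diff_left)
qed

lemma perp_lin:
  "perp e (x + y) = perp e x + perp e y" "perp e (c *\<^sub>R x) = c *\<^sub>R perp e x"
  "perp e (x - y) = perp e x - perp e y"
  unfolding perp_def by (simp_all add: inner_add_left inner_diff_left algebra_simps)

lemma perp_ee: "e \<bullet> e = 1 \<Longrightarrow> perp e (c *\<^sub>R e) = 0"
  unfolding perp_def by simp

lemma perp_dot_e: "e \<bullet> e = 1 \<Longrightarrow> perp e x \<bullet> e = 0"
  unfolding perp_def by (simp add: inner_diff_left)

lemma perp_dot_nu: "\<nu> \<bullet> e = 0 \<Longrightarrow> perp e x \<bullet> \<nu> = x \<bullet> \<nu>"
proof -
  assume "\<nu> \<bullet> e = 0"
  then have "e \<bullet> \<nu> = 0" by (simp add: inner_commute)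
  then show ?thesis unfolding perp_def by (simp add: inner_diff_left)
qed

lemma norm_split: "norm e = 1 \<Longrightarrow> norm x \<le> norm (perp e x) + \<bar>x \<bullet> e\<bar>"
proof -
  assume "norm e = 1"
  have "x = perp e x + (x \<bullet> e) *\<^sub>R e" unfolding perp_def by simp
  then have "norm x \<le> norm (perp e x) + norm ((x \<bullet> e) *\<^sub>R e)" by (metis norm_triangle_ineq)
  then show ?thesis using \<open>norm e = 1\<close> by simp
qed

lemma no_forever:
  fixes P w :: "real^3"
  assumes "norm P = \<rho>" and "\<forall>s>0. norm (P + s *\<^sub>R w) < \<rho>"
  shows False
proof -
  have sq: "(norm (P + s *\<^sub>R w))^2 = \<rho>^2 + s * (2 * (P \<bullet> w) + s * (w \<bullet> w))" for s
  proof -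
    have "(norm (P + s *\<^sub>R w))^2 = (P + s *\<^sub>R w) \<bullet> (P + s *\<^sub>R w)" by (simp add: power2_norm_eq_inner)
    also have "\<dots> = P \<bullet> P + s * (2 * (P \<bullet> w) + s * (w \<bullet> w))"
      by (simp add: inner_add_left inner_add_right inner_commute algebra_simps)
    also have "P \<bullet> P = \<rho>^2" using assms(1) by (metis power2_norm_eq_inner)
    finally show ?thesis .
  qed
  show False
  proof (cases "w \<bullet> w = 0")
    case True
    then have "w = 0" by simp
    then show False using assms by (metis add.right_neutral less_irrefl scaleR_zero_right zero_less_one)
  next
    case False
    then have W: "w \<bullet> w > 0" by (metis inner_gt_zero_iff inner_eq_zero_iff)
    define s where "s = (2 * \<bar>P \<bullet> w\<bar> + 1) / (w \<bullet> w)"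
    have s0: "s > 0" unfolding s_def using W by simp
    have "s * (w \<bullet> w) = 2 * \<bar>P \<bullet> w\<bar> + 1" unfolding s_def using W by simp
    then have "2 * (P \<bullet> w) + s * (w \<bullet> w) > 0" by linarith
    then have "(norm (P + s *\<^sub>R w))^2 \<ge> \<rho>^2" unfolding sq using s0 by simp
    moreover have "norm (P + s *\<^sub>R w) < \<rho>" using assms(2) s0 by blast
    moreover have "\<rho> \<ge> 0" using assms(1) by auto
    ultimately show False using power_strict_mono[of "norm (P + s *\<^sub>R w)" \<rho> 2] by simp
  qed
qed



lemma ta_shift:
  fixes x w P0 P1 e :: "real^3"
  assumes ee: "e \<bullet> e = 1" and P1: "P1 = P0 + T *\<^sub>R w" and w: "w = perp e x"
  shows "x \<bullet> cross3 (c *\<^sub>R P1) e = x \<bullet> cross3 (c *\<^sub>R P0) e"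
proof -
  have x: "x = w + (x \<bullet> e) *\<^sub>R e" using w unfolding perp_def by simp
  have "x \<bullet> cross3 w e = w \<bullet> cross3 w e + (x \<bullet> e) * (e \<bullet> cross3 w e)"
    by (subst x) (simp add: inner_add_left)
  then have z: "x \<bullet> cross3 w e = 0" by (simp add: dcs)
  show ?thesis unfolding P1 by (simp add: cross_lin scaleR_add_right inner_add_right z)
qed

lemma w_step:
  fixes P0 P1 w e :: "real^3"
  assumes ee: "e \<bullet> e = 1" and rho: "\<rho> > 0" and n0: "norm P0 = \<rho>" and n1: "norm P1 = \<rho>"
    and P1: "P1 = P0 + T *\<^sub>R w" and T: "T > 0"
  defines "w' \<equiv> w - (2 * (w \<bullet> (- (1 / \<rho>) *\<^sub>R P1))) *\<^sub>R (- (1 / \<rho>) *\<^sub>R P1)"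
  shows "w' \<bullet> w' = w \<bullet> w" "P1 \<bullet> w' = P0 \<bullet> w" "w' \<bullet> cross3 P1 e = w \<bullet> cross3 P0 e"
    "2 * (P0 \<bullet> w) + T * (w \<bullet> w) = 0"
proof -
  have p0: "P0 \<bullet> P0 = \<rho>^2" using n0 by (metis power2_norm_eq_inner)
  have p1: "P1 \<bullet> P1 = \<rho>^2" using n1 by (metis power2_norm_eq_inner)
  have "P1 \<bullet> P1 = P0 \<bullet> P0 + T * (2 * (P0 \<bullet> w) + T * (w \<bullet> w))"
    unfolding P1 by (simp add: inner_add_left inner_add_right inner_commute algebra_simps)
  then have "T * (2 * (P0 \<bullet> w) + T * (w \<bullet> w)) = 0" using p0 p1 by simp
  then show D: "2 * (P0 \<bullet> w) + T * (w \<bullet> w) = 0" using T by simp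
  define lam where "lam = 2 * (w \<bullet> P1) / \<rho>^2"
  have w': "w' = w - lam *\<^sub>R P1" unfolding w'_def lam_def using rho
    by (simp add: power2_eq_square)
  have l: "lam * \<rho>^2 = 2 * (w \<bullet> P1)" unfolding lam_def using rho by simp
  have "w' \<bullet> w' = w \<bullet> w - 2 * lam * (w \<bullet> P1) + lam * (lam * (P1 \<bullet> P1))"
    unfolding w' by (simp add: inner_diff_left inner_diff_right inner_commute algebra_simps)
  also have "lam * (lam * (P1 \<bullet> P1)) = 2 * lam * (w \<bullet> P1)" unfolding p1 using l by (simp add: algebra_simps)
  finally show "w' \<bullet> w' = w \<bullet> w" by simp
  have "P1 \<bullet> w' = P1 \<bullet> w - lam * (P1 \<bullet> P1)" unfolding w' by (simp add: inner_diff_right)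
  also have "\<dots> = - (P1 \<bullet> w)" unfolding p1 l by (simp add: inner_commute)
  also have "\<dots> = - (P0 \<bullet> w) - T * (w \<bullet> w)" unfolding P1 by (simp add: inner_add_left)
  also have "\<dots> = P0 \<bullet> w" using D by simp
  finally show "P1 \<bullet> w' = P0 \<bullet> w" .
  have "w' \<bullet> cross3 P1 e = w \<bullet> cross3 P1 e" unfolding w' by (simp add: inner_diff_left dcs)
  also have "\<dots> = w \<bullet> cross3 P0 e" unfolding P1 by (simp add: cross_lin inner_add_right dcs)
  finally show "w' \<bullet> cross3 P1 e = w \<bullet> cross3 P0 e" .
qed



theorem theorem2p12:
  fixes e F :: "real^3" and R r \<gamma> m f :: real and N :: enat
    and t :: "nat \<Rightarrow> real" and a u :: "nat \<Rightarrow> real^3" and U :: "nat \<Rightarrow> real^3^3"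
  assumes "norm e = 1"
    and "0 < r" and "r < R" and "0 < \<gamma>" and "0 < m"
    and "F = f *\<^sub>R e"
    and "transpose (U 0) = - U 0"
    and "orbit e R r \<gamma> m F N t a u U"
    and "trans_rolling e r (a 0) (u 0) (U 0)"
    and "\<forall>s \<in> flight_dom N t 0. flight e r \<gamma> m F a u U 0 s \<notin> axis e"
  shows "bounded (\<Union>k \<in> {k. enat k < N}. flight e r \<gamma> m F a u U k ` flight_dom N t k)"
proof -
  have ee: "e \<bullet> e = 1" using assms(1) by (metis power2_norm_eq_inner power_one)
  define \<rho> where "\<rho> = R - r"
  have rho: "\<rho> > 0" using assms(3) by (simp add: \<rho>_def)
  note orb = assms(8)[unfolded orbit_def]
  have N1: "1 \<le> N" using orb by blast
  have bd: "norm (perp e (a k)) = \<rho>" if "enat k < N" for k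
    using orb that unfolding cylBd_def \<rho>_def by blast
  have st1: "t k < t (Suc k)" if "enat (Suc k) < N" for k using orb that by blast
  have st2: "\<forall>s. 0 < s \<and> s < t (Suc k) - t k \<longrightarrow> norm (perp e (flight e r \<gamma> m F a u U k s)) < \<rho>"
    if "enat (Suc k) < N" for k using orb that unfolding \<rho>_def by blast
  have st3: "a (Suc k) = flight e r \<gamma> m F a u U k (t (Suc k) - t k)" if "enat (Suc k) < N" for k
    using orb that by blast
  have st4: "u (Suc k) = coll_u \<gamma> r (nrm e (a k)) (u k) (U k) + ((t (Suc k) - t k) / m) *\<^sub>R F"
    if "enat (Suc k) < N" for k using orb that by blast
  have st5: "U (Suc k) = coll_U \<gamma> r (nrm e (a k)) (u k) (U k)" if "enat (Suc k) < N" for k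
    using orb that by blast
  have lst: "\<forall>s. 0 < s \<longrightarrow> norm (perp e (flight e r \<gamma> m F a u U k s)) < \<rho>" if "N = enat (Suc k)" for k
    using orb that unfolding \<rho>_def by blast
  define nu where "nu k = nrm e (a k)" for k
  define up where "up k = coll_u \<gamma> r (nu k) (u k) (U k)" for k
  define w where "w k = perp e (up k)" for k
  define P where "P k = perp e (a k)" for k
  define ta where "ta k = cross3 (nu k) e" for k
  have PF: "perp e F = 0" using assms(6) perp_ee[OF ee] by simp
  have Fe: "F \<bullet> e = f" using assms(6) ee by simp
  have pf: "perp e (flight e r \<gamma> m F a u U k s) = P k + s *\<^sub>R w k" for k s
    unfolding flight_def P_def w_def up_def nu_def by (simp add: perp_lin PF)
  have fe: "flight e r \<gamma> m F a u U k s \<bullet> e = a k \<bullet> e + s * (up k \<bullet> e) + s^2 / (2*m) * f" for k s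
    unfolding flight_def up_def nu_def by (simp add: inner_add_left Fe)
  have Ninf: "N = \<infinity>"
  proof (rule ccontr)
    assume "N \<noteq> \<infinity>"
    then obtain n where n: "N = enat n" by (cases N) auto
    with N1 have "n \<ge> 1" by (simp add: one_enat_def)
    then obtain k where k: "n = Suc k" by (cases n) auto
    have "enat k < N" using n k by simp
    then have "norm (P k) = \<rho>" using bd P_def by simp
    moreover have "\<forall>s>0. norm (P k + s *\<^sub>R w k) < \<rho>" using lst[of k] n k pf by simp
    ultimately show False by (rule no_forever)
  qed
  have lt: "enat k < N" for k using Ninf by simp
  define T where "T k = t (Suc k) - t k" for k
  have T0: "T k > 0" for k using st1[OF lt] T_def by auto
  have Pn: "norm (P k) = \<rho>" for k using bd[OF lt] P_def by simp
  have Psuc: "P (Suc k) = P k + T k *\<^sub>R w k" for k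
    using st3[OF lt, of k] pf[of k "T k"] unfolding P_def T_def by simp
  have usuc: "u (Suc k) = up k + (T k / m) *\<^sub>R F" for k
    using st4[OF lt, of k] unfolding up_def nu_def T_def by simp
  have Usuc: "U (Suc k) = coll_U \<gamma> r (nu k) (u k) (U k)" for k
    using st5[OF lt, of k] unfolding nu_def by simp
  have intr: "norm (P k + s *\<^sub>R w k) < \<rho>" if "0 < s" "s < T k" for k s
    using st2[OF lt, of k] that pf unfolding T_def by simp
  have asuc_e: "a (Suc k) \<bullet> e = a k \<bullet> e + T k * (up k \<bullet> e) + (T k)^2 / (2*m) * f" for k
    using st3[OF lt, of k] fe unfolding T_def by simp
  have nuP: "nu k = - (1 / \<rho>) *\<^sub>R P k" for k
    unfolding nu_def nrm_def P_def using Pn[of k] unfolding P_def by simp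
  have nn: "nu k \<bullet> nu k = 1" for k
  proof -
    have "P k \<bullet> P k = \<rho>^2" using Pn[of k] by (metis power2_norm_eq_inner)
    then show ?thesis unfolding nuP using rho by (simp add: power2_eq_square)
  qed
  have ne: "nu k \<bullet> e = 0" for k unfolding nuP P_def using perp_dot_e[OF ee] by simp
  have ta_tt: "ta k \<bullet> ta k = 1" and ta_e: "F \<bullet> ta k = 0" for k
  proof -
    show "ta k \<bullet> ta k = 1" unfolding ta_def using frame(1)[OF ee nn ne] .
    have "e \<bullet> ta k = 0" unfolding ta_def using frame(2)[OF ee nn ne] by (simp add: inner_commute)
    then show "F \<bullet> ta k = 0" using assms(6) by simp
  qed
  have inv: "skw (U k) \<and> u k \<bullet> ta k = r * ((U k *v nu k) \<bullet> ta k)" for k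
  proof (induction k)
    case 0
    have sk: "skw (U 0)" using assms(7) by (rule skw_transpose)
    define v where "v = u 0 - r *\<^sub>R (U 0 *v nu 0)"
    have "(v \<bullet> ta 0) *\<^sub>R ta 0 = 0" using assms(9) unfolding trans_rolling_def Let_def v_def ta_def nu_def by simp
    moreover have "ta 0 \<noteq> 0" using ta_tt[of 0] by auto
    ultimately have "v \<bullet> ta 0 = 0" by simp
    then have "u 0 \<bullet> ta 0 = r * ((U 0 *v nu 0) \<bullet> ta 0)" unfolding v_def by (simp add: inner_diff_left)
    then show ?case using sk by simp
  next
    case (Suc k)
    then have sk: "skw (U k)" and roll: "u k \<bullet> cross3 (nu k) e = r * ((U k *v nu k) \<bullet> cross3 (nu k) e)"
      unfolding ta_def by auto
    note coll = collision[OF ee nn ne sk assms(4) assms(2) roll]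
    have sk1: "skw (U (Suc k))" using coll(3) Usuc by simp
    note tr = transport[OF ee nn[of k] ne[of k] nn[of "Suc k"] ne[of "Suc k"]]
    note rot = rot_skw[OF sk1 tr(1) tr(2) tr(3)]
    have "u (Suc k) \<bullet> ta (Suc k) = up k \<bullet> ta (Suc k)"
      unfolding usuc using ta_e by (simp add: inner_add_left)
    also have "\<dots> = up k \<bullet> ta k"
      unfolding ta_def nuP using ta_shift[OF ee Psuc[of k] w_def[of k], of "- (1 / \<rho>)"]
      by simp
    also have "\<dots> = u k \<bullet> ta k" using coll(6) unfolding up_def ta_def .
    also have "\<dots> = r * ((U (Suc k) *v nu k) \<bullet> ta k)" using coll(7) roll Usuc unfolding ta_def by simp
    also have "\<dots> = r * ((U (Suc k) *v nu (Suc k)) \<bullet> ta (Suc k))" using rot(1) unfolding ta_def by simp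
    finally show ?case using sk1 by simp
  qed
  have sk: "skw (U k)" for k using inv by blast
  have roll: "u k \<bullet> cross3 (nu k) e = r * ((U k *v nu k) \<bullet> cross3 (nu k) e)" for k
    using inv unfolding ta_def by blast
  note coll = collision[OF ee nn ne sk assms(4) assms(2) roll]
  have wsuc: "w (Suc k) = w k - (2 * (w k \<bullet> (- (1 / \<rho>) *\<^sub>R P (Suc k)))) *\<^sub>R (- (1 / \<rho>) *\<^sub>R P (Suc k))" for k
  proof -
    have pu: "perp e (u (Suc k)) = w k" unfolding usuc w_def by (simp add: perp_lin PF)
    have "w (Suc k) = perp e (u (Suc k)) - (2 * (u (Suc k) \<bullet> nu (Suc k))) *\<^sub>R nu (Suc k)"
      unfolding w_def up_def using coll(1)[of "Suc k"] .
    also have "u (Suc k) \<bullet> nu (Suc k) = w k \<bullet> nu (Suc k)"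
      using perp_dot_nu[OF ne[of "Suc k"], of "u (Suc k)"] pu by simp
    finally show ?thesis using pu unfolding nuP by simp
  qed
  note ws = w_step[OF ee rho Pn Pn Psuc T0]
  have W: "w k \<bullet> w k = w 0 \<bullet> w 0" for k
  proof (induction k)
    case (Suc k) then show ?case using ws(1)[of k] wsuc[of k] by simp
  qed simp
  have D: "P k \<bullet> w k = P 0 \<bullet> w 0" for k
  proof (induction k)
    case (Suc k) then show ?case using ws(2)[of k] wsuc[of k] by simp
  qed simp
  have L: "w k \<bullet> cross3 (P k) e = w 0 \<bullet> cross3 (P 0) e" for k
  proof (induction k)
    case (Suc k) then show ?case using ws(3)[of k] wsuc[of k] by simp
  qed simp
  define W0 where "W0 = w 0 \<bullet> w 0"
  define D0 where "D0 = P 0 \<bullet> w 0"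
  define L0 where "L0 = w 0 \<bullet> cross3 (P 0) e"
  have W0: "W0 > 0"
  proof (rule ccontr)
    assume "\<not> W0 > 0"
    then have "w 0 = 0" unfolding W0_def by (metis inner_gt_zero_iff)
    then have "norm (P 0) < \<rho>" using intr[of "T 0 / 2" 0] T0[of 0] by simp
    then show False using Pn[of 0] by simp
  qed
  define TT where "TT = - 2 * D0 / W0"
  have Tc: "T k = TT" for k
  proof -
    have "2 * D0 + T k * W0 = 0" using ws(4)[of k] W[of k] D[of k] unfolding W0_def D0_def by simp
    then show ?thesis unfolding TT_def using W0 by (simp add: field_simps)
  qed
  have TT0: "TT > 0" using T0[of 0] Tc[of 0] by simp
  define CC where "CC = (\<rho>^2 + TT * D0) / \<rho>^2"
  define SS where "SS = TT * L0 / \<rho>^2"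
  have Cc: "nu (Suc k) \<bullet> nu k = CC" for k
  proof -
    have "P (Suc k) \<bullet> P k = \<rho>^2 + TT * D0"
    proof -
      have "P k \<bullet> P k = \<rho>^2" using Pn[of k] by (metis power2_norm_eq_inner)
      then show ?thesis unfolding Psuc using D[of k] Tc[of k] unfolding D0_def
        by (simp add: inner_add_left inner_add_right inner_commute)
    qed
    then show ?thesis unfolding nuP CC_def by (simp add: power2_eq_square)
  qed
  have Sc: "nu (Suc k) \<bullet> ta k = SS" for k
  proof -
    have "P (Suc k) \<bullet> cross3 (P k) e = TT * L0"
      unfolding Psuc using L[of k] Tc[of k] unfolding L0_def
      by (simp add: inner_add_left dcs)
    then show ?thesis unfolding ta_def nuP SS_def by (simp add: cross_lin power2_eq_square)
  qed
  have D0W: "D0 = - TT * W0 / 2" unfolding TT_def using W0 by simp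
  have CC1: "CC \<noteq> 1"
  proof
    assume "CC = 1"
    then have "TT * D0 = 0" unfolding CC_def using rho by (simp add: field_simps)
    then show False unfolding D0W using TT0 W0 by simp
  qed
  have CS: "CC^2 + SS^2 = 1" using transport(3)[OF ee nn[of 0] ne[of 0] nn[of 1] ne[of 1]] Cc[of 0] Sc[of 0]
    unfolding ta_def by simp
  define p where "p k = u k \<bullet> e" for k
  define A where "A k = r * ((U k *v nu k) \<bullet> e)" for k
  define B where "B k = r * ((U k *v ta k) \<bullet> e)" for k
  define z where "z k = a k \<bullet> e" for k
  define G where "G = TT * f / m"
  have upe: "up k \<bullet> e = cc \<gamma> * p k + ss \<gamma> * \<gamma> * A k" for k
    using coll(2)[of k] unfolding up_def p_def A_def .
  have rp: "p (Suc k) = cc \<gamma> * p k + ss \<gamma> * \<gamma> * A k + G" for k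
    unfolding p_def[of "Suc k"] usuc G_def using upe[of k] Tc[of k] Fe by (simp add: inner_add_left)
  have rot: "(U (Suc k) *v nu (Suc k)) \<bullet> e = CC * ((U (Suc k) *v nu k) \<bullet> e) + SS * ((U (Suc k) *v ta k) \<bullet> e)"
     "(U (Suc k) *v ta (Suc k)) \<bullet> e = CC * ((U (Suc k) *v ta k) \<bullet> e) - SS * ((U (Suc k) *v nu k) \<bullet> e)" for k
  proof -
    note tr = transport[OF ee nn[of k] ne[of k] nn[of "Suc k"] ne[of "Suc k"]]
    note rt = rot_skw[OF sk[of "Suc k"] tr(1) tr(2) tr(3)]
    show "(U (Suc k) *v nu (Suc k)) \<bullet> e = CC * ((U (Suc k) *v nu k) \<bullet> e) + SS * ((U (Suc k) *v ta k) \<bullet> e)"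
      using rt(2)[of e] Cc[of k] Sc[of k] unfolding ta_def by simp
    show "(U (Suc k) *v ta (Suc k)) \<bullet> e = CC * ((U (Suc k) *v ta k) \<bullet> e) - SS * ((U (Suc k) *v nu k) \<bullet> e)"
      using rt(3)[of e] Cc[of k] Sc[of k] unfolding ta_def by simp
  qed
  have c4: "r * ((U (Suc k) *v nu k) \<bullet> e) = (ss \<gamma> / \<gamma>) * p k - cc \<gamma> * A k" for k
    using coll(4)[of k] Usuc[of k] unfolding p_def A_def by simp
  have c5: "r * ((U (Suc k) *v ta k) \<bullet> e) = B k" for k
    using coll(5)[of k] Usuc[of k] unfolding B_def ta_def by simp
  have rA: "A (Suc k) = CC * ((ss \<gamma> / \<gamma>) * p k - cc \<gamma> * A k) + SS * B k" for k
    unfolding A_def[of "Suc k"] rot(1) c4[of k, symmetric] c5[of k, symmetric] by (simp add: algebra_simps)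
  have rB: "B (Suc k) = CC * B k - SS * ((ss \<gamma> / \<gamma>) * p k - cc \<gamma> * A k)" for k
    unfolding B_def[of "Suc k"] rot(2) c4[of k, symmetric] c5[of k, symmetric] by (simp add: algebra_simps)
  have rz: "z (Suc k) = z k + TT * (cc \<gamma> * p k + ss \<gamma> * \<gamma> * A k) + G * TT / 2" for k
    unfolding z_def[of "Suc k"] asuc_e Tc upe G_def z_def[of k] by (simp add: power2_eq_square mult.commute)
  obtain M where M: "\<And>k. \<bar>z k\<bar> \<le> M \<and> \<bar>p k\<bar> \<le> M"
    using scalar_bounded[where p=p and A=A and B=B and z=z and C=CC and S=SS and G=G and T=TT, OF assms(4) CS CC1 rp rA rB rz] by blast
  define Bd where "Bd = \<rho> + M + TT * (M + \<bar>G\<bar>) + TT^2 / (2*m) * \<bar>f\<bar>"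
  show ?thesis unfolding bounded_iff
  proof (intro exI ballI)
    fix x assume "x \<in> (\<Union>k\<in>{k. enat k < N}. flight e r \<gamma> m F a u U k ` flight_dom N t k)"
    then obtain k s where x: "x = flight e r \<gamma> m F a u U k s" and s: "s \<in> flight_dom N t k" by blast
    have s0: "0 \<le> s" and sT: "s \<le> TT" using s Tc[of k] unfolding flight_dom_def Ninf T_def by auto
    have np: "norm (perp e x) \<le> \<rho>"
    proof -
      have "norm (P k + s *\<^sub>R w k) \<le> \<rho>"
      proof (cases "s = 0")
        case True then show ?thesis using Pn[of k] by simp
      next
        case False
        show ?thesis
        proof (cases "s = TT")
          case True then show ?thesis using Pn[of "Suc k"] Psuc[of k] Tc[of k] by simp
        next
          case False
          then have "s < T k" using sT Tc[of k] by simp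
          then show ?thesis using intr[of s k] s0 \<open>s \<noteq> 0\<close> by simp
        qed
      qed
      then show ?thesis using pf unfolding x by simp
    qed
    have xe: "x \<bullet> e = z k + s * (up k \<bullet> e) + s^2 / (2*m) * f" using fe unfolding z_def x by simp
    have upb: "\<bar>up k \<bullet> e\<bar> \<le> M + \<bar>G\<bar>"
    proof -
      have "up k \<bullet> e = p (Suc k) - G" using rp[of k] upe[of k] by simp
      then show ?thesis using M[of "Suc k"] by linarith
    qed
    have t1: "\<bar>s * (up k \<bullet> e)\<bar> \<le> TT * (M + \<bar>G\<bar>)"
      unfolding abs_mult using s0 sT upb by (intro mult_mono) auto
    have t2: "\<bar>s^2 / (2*m) * f\<bar> \<le> TT^2 / (2*m) * \<bar>f\<bar>"
    proof -
      have "s^2 \<le> TT^2" using s0 sT by (intro power_mono) auto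
      then have "s^2 / (2*m) \<le> TT^2 / (2*m)" using assms(5) by (simp add: divide_right_mono)
      moreover have "\<bar>s^2 / (2*m) * f\<bar> = s^2 / (2*m) * \<bar>f\<bar>" using assms(5) by (simp add: abs_mult)
      ultimately show ?thesis using mult_right_mono[of "s^2 / (2*m)" "TT^2 / (2*m)" "\<bar>f\<bar>"] by simp
    qed
    have "\<bar>x \<bullet> e\<bar> \<le> M + TT * (M + \<bar>G\<bar>) + TT^2 / (2*m) * \<bar>f\<bar>"
      unfolding xe using M[of k] t1 t2 by linarith
    then show "norm x \<le> Bd" unfolding Bd_def using norm_split[OF assms(1), of x] np by linarith
  qed
qed

end
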